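(* Let $n$ be a positive integer. The set $\{P_1,\dots,P_{(n-1)^2},C_1,\dots,C_n\}$ is a basis for the set $\Gamma_n$ of $n\times n$ stochastic matrices, i.e., it consists of $n^2-n+1$ linearly independent stochastic matrices whose linear span contains $\Gamma_n$.
   Context: A real $n\times n$ matrix is stochastic if its entries are nonnegative and each row sums to $1$; $\Gamma_n$ is the set of such matrices (an affine set of dimension $n(n-1)$). Let $l=n-1$. Numbering of positions: for an $l\times l$ matrix, position $(i,j)$ is assigned the number $i+(j-i)l\pmod{l^2}$, taken in $\{1,\dots,l^2\}$. For $1\le i\le l^2$, $A_i\in M_l$ is the $(0,1)$-matrix whose entries are $0$ except those in positions numbered $i,i+1,\dots,i+l-2\pmod{l^2}$, which are $1$. For $1\le i\le (n-1)^2$, $P_i$ is the unique $n\times n$ permutation matrix such that deleting its first row and first column yields $A_i$. For $j\in[n]$, $C_j$ is the $n\times n$ $(0,1)$-matrix whose $j$-th column is all $1$'s and all other entries $0$. *)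

theory Defs
  imports Complex_Main
begin

text \<open>Matrices are functions nat \<Rightarrow> nat \<Rightarrow> real, indexed 1-based by rows and columns;
  an n \<times> n matrix is required to vanish outside {1..n} \<times> {1..n}.\<close>

definition is_matrix :: "nat \<Rightarrow> (nat \<Rightarrow> nat \<Rightarrow> real) \<Rightarrow> bool" where
  "is_matrix n M \<longleftrightarrow> (\<forall>i j. (i \<notin> {1..n} \<or> j \<notin> {1..n}) \<longrightarrow> M i j = 0)"

definition stochastic :: "nat \<Rightarrow> (nat \<Rightarrow> nat \<Rightarrow> real) \<Rightarrow> bool" where
  "stochastic n M \<longleftrightarrow> is_matrix n M \<and>
     (\<forall>i\<in>{1..n}. \<forall>j\<in>{1..n}. M i j \<ge> 0) \<and> (\<forall>i\<in>{1..n}. (\<Sum>j=1..n. M i j) = 1)"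

definition Gamma :: "nat \<Rightarrow> (nat \<Rightarrow> nat \<Rightarrow> real) set" where
  "Gamma n = {M. stochastic n M}"

definition perm_matrix :: "nat \<Rightarrow> (nat \<Rightarrow> nat \<Rightarrow> real) \<Rightarrow> bool" where
  "perm_matrix n M \<longleftrightarrow> (\<exists>\<sigma>. bij_betw \<sigma> {1..n} {1..n} \<and>
     (\<forall>i j. M i j = (if i \<in> {1..n} \<and> j = \<sigma> i then 1 else 0)))"

text \<open>Number of position (i,j) of an l \<times> l matrix: i + (j - i) l mod l^2, taken in {1..l^2}.\<close>
definition pos_num :: "nat \<Rightarrow> nat \<Rightarrow> nat \<Rightarrow> int" where
  "pos_num l i j = (let k = (int i + (int j - int i) * int l) mod (int l ^ 2)
                    in if k = 0 then int l ^ 2 else k)"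

definition Amat :: "nat \<Rightarrow> nat \<Rightarrow> (nat \<Rightarrow> nat \<Rightarrow> real)" where
  "Amat l i r s = (if r \<in> {1..l} \<and> s \<in> {1..l} \<and>
       (\<exists>t. t + 1 < l \<and> (int i + int t) mod (int l ^ 2) = pos_num l r s mod (int l ^ 2))
     then 1 else 0)"

definition Pmat :: "nat \<Rightarrow> nat \<Rightarrow> (nat \<Rightarrow> nat \<Rightarrow> real)" where
  "Pmat n i = (THE M. perm_matrix n M \<and>
      (\<forall>r\<in>{1..n-1}. \<forall>s\<in>{1..n-1}. M (r+1) (s+1) = Amat (n-1) i r s))"

definition Cmat :: "nat \<Rightarrow> nat \<Rightarrow> (nat \<Rightarrow> nat \<Rightarrow> real)" where
  "Cmat n j r s = (if r \<in> {1..n} \<and> s = j then 1 else 0)"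

end

theory Submission
  imports Defs "HOL-Library.Function_Algebras"
begin


definition hh :: "int \<Rightarrow> int \<Rightarrow> int" where "hh l v = v mod l + v div l"

lemma small_mult_zero:
  fixes l m :: int
  assumes "0 < l" "-l < l*m" "l*m < l"
  shows "m = 0"
proof (rule ccontr)
  assume "m \<noteq> 0"
  then have "m \<ge> 1 \<or> m \<le> -1" by linarith
  then show False
  proof
    assume "m \<ge> 1" then have "l*1 \<le> l*m" using assms(1) by (intro mult_left_mono) auto
    then show False using assms by linarith
  next
    assume "m \<le> -1" then have "l*m \<le> l*(-1)" using assms(1) by (intro mult_left_mono) auto
    then show False using assms by linarith
  qed
qed

lemma poschar:
  fixes l r s v :: int
  assumes l: "l \<ge> 1" and r: "1 \<le> r" "r \<le> l" and s: "1 \<le> s" "s \<le> l"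
  shows "(v+1) mod l^2 = (r + (s-r)*l) mod l^2 \<longleftrightarrow> v mod l = r-1 \<and> hh l v mod l = s-1"
proof
  assume h: "(v+1) mod l^2 = (r + (s-r)*l) mod l^2"
  then have "l^2 dvd (v+1) - (r + (s-r)*l)" by (simp add: mod_eq_dvd_iff)
  then obtain k where k: "(v+1) - (r + (s-r)*l) = l^2 * k" by (auto simp: dvd_def)
  then have v: "v = (r-1) + (s-r+k*l)*l" by (simp add: algebra_simps power2_eq_square)
  have m: "v mod l = r-1" unfolding v using l r by (simp add: mod_pos_pos_trivial)
  have d: "v div l = s-r+k*l" unfolding v using l r by (simp add: div_pos_pos_trivial)
  have "hh l v = (s-1) + k*l" unfolding hh_def m d by simp
  then have "hh l v mod l = s-1" using l s by (simp add: mod_pos_pos_trivial)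
  with m show "v mod l = r-1 \<and> hh l v mod l = s-1" by simp
next
  assume h: "v mod l = r-1 \<and> hh l v mod l = s-1"
  obtain q where q: "q = v div l" by simp
  obtain K where K: "K = (r - 1 + q) div l" by simp
  have v: "v = l*q + (r-1)" using h q by (metis div_mult_mod_eq mult.commute)
  have "r - 1 + q = l * K + (s-1)"
    using h q K unfolding hh_def by (metis div_mult_mod_eq mult.commute)
  then have qq: "q = s - r + l * K" by simp
  have "v + 1 = r + l*(s - r + l*K)" using v qq by simp
  then have "v + 1 = (r + (s-r)*l) + l^2 * K"
    by (simp add: algebra_simps power2_eq_square)
  then show "(v+1) mod l^2 = (r + (s-r)*l) mod l^2" by simp
qed

lemma hh_alt: "hh l w = w - (l-1) * (w div l)"
  unfolding hh_def by (simp add: algebra_simps minus_div_mult_eq_mod[symmetric])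

lemma hh_step:
  fixes l u t t' :: int
  assumes l: "l \<ge> 1" and t: "0 \<le> t" "t < t'" "t' \<le> l - 2"
  shows "hh l (u+t) mod l \<noteq> hh l (u+t') mod l"
proof
  assume eq: "hh l (u+t) mod l = hh l (u+t') mod l"
  define D where "D = (u+t') div l - (u+t) div l"
  have D0: "0 \<le> D" unfolding D_def using t l by (simp add: zdiv_mono1)
  have "(u+t') div l \<le> (u+t+l) div l" by (rule zdiv_mono1) (use t l in auto)
  also have "\<dots> = (u+t) div l + 1" using div_add_self2[of l "u+t"] l by simp
  finally have D1: "D \<le> 1" unfolding D_def by simp
  have diff: "hh l (u+t') - hh l (u+t) = (t'-t) - (l-1)*D"
    unfolding hh_alt D_def by (simp add: algebra_simps)
  have "l dvd hh l (u+t') - hh l (u+t)" using eq[symmetric] by (simp add: mod_eq_dvd_iff)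
  then obtain m where m: "(t'-t) - (l-1)*D = l*m" using diff by (auto simp: dvd_def)
  have "D = 0 \<or> D = 1" using D0 D1 by linarith
  then have e: "l*m = t'-t \<or> l*m = t'-t-l+1" using m by auto
  have "-l < l*m \<and> l*m < l \<and> l*m \<noteq> 0" using e t by linarith
  then show False using small_mult_zero[of l m] l by auto
qed



lemma pos_num_mod:
  "pos_num l r s mod (int l ^ 2) = (int r + (int s - int r) * int l) mod (int l ^ 2)"
  unfolding pos_num_def Let_def by auto

lemma window_row:
  fixes L u x :: int
  assumes L: "L \<ge> 1" and x: "0 \<le> x" "x < L"
  shows "(\<exists>t::nat. int t + 1 < L \<and> (u + int t) mod L = x \<and> Q (u + int t))
     \<longleftrightarrow> (x \<noteq> (u-1) mod L \<and> Q (u + (x-u) mod L))"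
proof
  assume "\<exists>t::nat. int t + 1 < L \<and> (u + int t) mod L = x \<and> Q (u + int t)"
  then obtain t :: nat where t: "int t + 1 < L" "(u + int t) mod L = x" "Q (u + int t)" by blast
  have "(x - u) mod L = ((u + int t) mod L - u) mod L" using t by simp
  also have "\<dots> = int t mod L" by (simp add: mod_diff_left_eq)
  also have "\<dots> = int t" using t L by simp
  finally have tt: "(x-u) mod L = int t" .
  have "x \<noteq> (u-1) mod L"
  proof
    assume "x = (u-1) mod L"
    then have "(u + int t) mod L = (u - 1) mod L" using t by simp
    then have "L dvd (u + int t) - (u - 1)" by (simp add: mod_eq_dvd_iff)
    then have "L dvd int t + 1" by (simp add: algebra_simps)
    then have "L \<le> int t + 1" by (rule zdvd_imp_le) simp
    then show False using t by simp
  qed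
  then show "x \<noteq> (u-1) mod L \<and> Q (u + (x-u) mod L)" using tt t by simp
next
  assume h: "x \<noteq> (u-1) mod L \<and> Q (u + (x-u) mod L)"
  define t where "t = nat ((x-u) mod L)"
  have ti: "int t = (x-u) mod L" unfolding t_def using L by simp
  have "(u + int t) mod L = (u + (x-u)) mod L" unfolding ti by (simp add: mod_add_right_eq)
  then have m: "(u + int t) mod L = x" using x by simp
  have "int t \<noteq> L - 1"
  proof
    assume "int t = L - 1"
    then have e: "u + int t = (u - 1) + L" by simp
    have "(u + int t) mod L = ((u - 1) + L) mod L" by (simp only: e)
    then have "(u + int t) mod L = (u - 1) mod L" using mod_add_self2 by simp
    then show False using m h by simp
  qed
  moreover have "int t < L" unfolding ti using L by simp
  ultimately have "int t + 1 < L" by simp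
  then show "\<exists>t::nat. int t + 1 < L \<and> (u + int t) mod L = x \<and> Q (u + int t)"
    using m h ti by (intro exI[of _ t]) simp
qed

definition x0f :: "nat \<Rightarrow> nat \<Rightarrow> int" where
  "x0f l i = (int i - 2) mod int l"
definition tauf :: "nat \<Rightarrow> nat \<Rightarrow> int \<Rightarrow> int" where
  "tauf l i x = hh (int l) ((int i - 1) + (x - (int i - 1)) mod int l) mod int l"

lemma amat_char:
  assumes l: "l \<ge> 1" and r: "r \<in> {1..l}" and s: "s \<in> {1..l}"
  shows "Amat l i r s = (if int r - 1 \<noteq> x0f l i \<and> tauf l i (int r - 1) = int s - 1 then 1 else 0)"
proof -
  define L where "L = int l"
  define u where "u = int i - 1"
  have L1: "L \<ge> 1" using l unfolding L_def by simp
  have "(\<exists>t. t + 1 < l \<and> (int i + int t) mod (int l ^ 2) = pos_num l r s mod (int l ^ 2))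
      \<longleftrightarrow> (\<exists>t::nat. int t + 1 < L \<and> (u + int t) mod L = int r - 1 \<and> hh L (u + int t) mod L = int s - 1)"
  proof -
    have "(int i + int t) mod (int l ^ 2) = pos_num l r s mod (int l ^ 2) \<longleftrightarrow>
          (u + int t) mod L = int r - 1 \<and> hh L (u + int t) mod L = int s - 1" for t
    proof -
      have e: "int i + int t = (u + int t) + 1" unfolding u_def by simp
      show ?thesis unfolding pos_num_mod L_def e
        using poschar[of "int l" "int r" "int s" "u + int t"] l r s by simp
    qed
    moreover have "t + 1 < l \<longleftrightarrow> int t + 1 < L" for t unfolding L_def by linarith
    ultimately show ?thesis by simp
  qed
  also have "\<dots> \<longleftrightarrow> (int r - 1 \<noteq> (u-1) mod L \<and> hh L (u + (int r - 1 - u) mod L) mod L = int s - 1)"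
    using window_row[of L "int r - 1" u "\<lambda>w. hh L w mod L = int s - 1"] L1 r
    unfolding L_def by simp
  finally have c0: "(\<exists>t. t + 1 < l \<and> (int i + int t) mod (int l ^ 2) = pos_num l r s mod (int l ^ 2))
      \<longleftrightarrow> (int r - 1 \<noteq> (u-1) mod L \<and> hh L (u + (int r - 1 - u) mod L) mod L = int s - 1)" .
  have x0: "(u-1) mod L = x0f l i" by (simp add: x0f_def u_def L_def)
  have tau: "hh L (u + (int r - 1 - u) mod L) mod L = tauf l i (int r - 1)" by (simp add: tauf_def u_def L_def)
  have c: "(\<exists>t. t + 1 < l \<and> (int i + int t) mod (int l ^ 2) = pos_num l r s mod (int l ^ 2))
      \<longleftrightarrow> (int r - 1 \<noteq> x0f l i \<and> tauf l i (int r - 1) = int s - 1)"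
    using c0 unfolding x0 tau .
  show ?thesis unfolding Amat_def using r s c by simp
qed

lemma tauf_range:
  assumes "l \<ge> 1" shows "0 \<le> tauf l i x \<and> tauf l i x < int l"
  unfolding tauf_def using assms by simp

lemma tauf_inj:
  assumes l: "l \<ge> 1" and x: "0 \<le> x" "x < int l" and y: "0 \<le> y" "y < int l"
    and nx: "x \<noteq> x0f l i" and ny: "y \<noteq> x0f l i" and xy: "x \<noteq> y"
  shows "tauf l i x \<noteq> tauf l i y"
proof -
  define L where "L = int l"
  define u where "u = int i - 1"
  have L1: "L \<ge> 1" using l unfolding L_def by simp
  have ne: "(z - u) mod L \<noteq> L - 1" if "0 \<le> z" "z < L" "z \<noteq> x0f l i" for z
  proof
    assume a: "(z - u) mod L = L - 1"
    have "z = (u + (z-u)) mod L" using that by simp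
    also have "\<dots> = (u + (z-u) mod L) mod L" by (simp add: mod_add_right_eq)
    also have "\<dots> = ((u - 1) + L) mod L" unfolding a by (simp add: algebra_simps)
    also have "\<dots> = (u - 1) mod L" using mod_add_self2 by simp
    finally show False using that unfolding x0f_def u_def L_def by (simp add: algebra_simps)
  qed
  have tb: "0 \<le> (z - u) mod L \<and> (z-u) mod L \<le> L - 2" if "0 \<le> z" "z < L" "z \<noteq> x0f l i" for z
  proof -
    have "(z-u) mod L < L" "0 \<le> (z-u) mod L" using L1 by simp_all
    moreover have "(z-u) mod L \<noteq> L-1" using ne that by simp
    ultimately show ?thesis by linarith
  qed
  have tx: "0 \<le> (x - u) mod L" "(x-u) mod L \<le> L - 2" using tb[of x] x nx unfolding L_def by auto
  have ty: "0 \<le> (y - u) mod L" "(y-u) mod L \<le> L - 2" using tb[of y] y ny unfolding L_def by auto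
  have dxy: "(x - u) mod L \<noteq> (y - u) mod L"
  proof
    assume "(x - u) mod L = (y - u) mod L"
    then have "(u + (x - u) mod L) mod L = (u + (y-u) mod L) mod L" by simp
    then have "(u + (x - u)) mod L = (u + (y-u)) mod L" by (simp add: mod_add_right_eq)
    then show False using x y xy unfolding L_def by simp
  qed
  show ?thesis
  proof (cases "(x - u) mod L < (y - u) mod L")
    case True
    then show ?thesis using hh_step[of L "(x - u) mod L" "(y - u) mod L" u] L1 tx ty
      unfolding tauf_def L_def u_def by simp
  next
    case False
    then have "(y - u) mod L < (x - u) mod L" using dxy by simp
    then show ?thesis using hh_step[of L "(y - u) mod L" "(x - u) mod L" u] L1 tx ty
      unfolding tauf_def L_def u_def by simp
  qed
qed



definition pm :: "nat \<Rightarrow> (nat \<Rightarrow> nat) \<Rightarrow> nat \<Rightarrow> nat \<Rightarrow> real" where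
  "pm n \<sigma> = (\<lambda>r s. if r \<in> {1..n} \<and> s = \<sigma> r then 1 else 0)"

lemma extend_inj:
  fixes f :: "nat \<Rightarrow> nat" and n :: nat
  assumes inj: "inj_on f {2..n}" and img: "f ` {2..n} \<subseteq> {1..n}" and n: "n \<ge> 1"
  shows "\<exists>\<sigma>. bij_betw \<sigma> {1..n} {1..n} \<and> (\<forall>r\<in>{2..n}. \<sigma> r = f r)"
proof -
  have "card (f`{2..n}) = n - 1" using card_image[OF inj] by simp
  then have "f ` {2..n} \<noteq> {1..n}" using n by auto
  then obtain y where y: "y \<in> {1..n}" "y \<notin> f`{2..n}" using img by blast
  define \<sigma> where "\<sigma> = f(1:=y)"
  have e: "{1..n} = insert 1 {2..n}" using n by auto
  have s2: "\<sigma> ` {2..n} = f ` {2..n}" unfolding \<sigma>_def by (auto intro!: image_cong)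
  have inj2: "inj_on \<sigma> {2..n}" using inj unfolding \<sigma>_def inj_on_def by auto
  have injs: "inj_on \<sigma> {1..n}" unfolding e using inj2 y s2 by (auto simp: \<sigma>_def)
  have ims: "\<sigma> ` {1..n} \<subseteq> {1..n}" unfolding e using s2 img y by (auto simp: \<sigma>_def)
  have "\<sigma> ` {1..n} = {1..n}" using endo_inj_surj[OF _ ims injs] by simp
  then have "bij_betw \<sigma> {1..n} {1..n}" using injs unfolding bij_betw_def by simp
  moreover have "\<forall>r\<in>{2..n}. \<sigma> r = f r" unfolding \<sigma>_def by auto
  ultimately show ?thesis by blast
qed

lemma pm_unique:
  fixes \<sigma> \<sigma>' :: "nat \<Rightarrow> nat" and n :: nat
  assumes b: "bij_betw \<sigma> {1..n} {1..n}" and b': "bij_betw \<sigma>' {1..n} {1..n}"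
    and agree: "\<forall>r\<in>{2..n}. \<forall>s\<in>{2..n}. (\<sigma> r = s \<longleftrightarrow> \<sigma>' r = s)"
  shows "\<forall>r\<in>{1..n}. \<sigma> r = \<sigma>' r"
proof -
  have inn: "\<sigma> r \<in> {1..n}" "\<sigma>' r \<in> {1..n}" if "r \<in> {1..n}" for r
    using bij_betw_apply[OF b that] bij_betw_apply[OF b' that] by auto
  have rest: "\<sigma> r = \<sigma>' r" if r: "r \<in> {2..n}" for r
  proof (cases "\<sigma> r = 1")
    case True
    show ?thesis
    proof (rule ccontr)
      assume "\<sigma> r \<noteq> \<sigma>' r"
      then have "\<sigma>' r \<in> {2..n}" using inn[of r] r True by auto
      then show False using agree r \<open>\<sigma> r \<noteq> \<sigma>' r\<close> by auto
    qed
  next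
    case False
    then have "\<sigma> r \<in> {2..n}" using inn[of r] r by auto
    then have "(\<sigma> r = \<sigma> r) = (\<sigma>' r = \<sigma> r)" using agree r by blast
    then show ?thesis by simp
  qed
  have one: "\<sigma> 1 = \<sigma>' 1" if n: "n \<ge> 1"
  proof (rule ccontr)
    assume ne: "\<sigma> 1 \<noteq> \<sigma>' 1"
    have "\<sigma> 1 \<in> \<sigma>' ` {1..n}" using inn[of 1] n bij_betw_imp_surj_on[OF b'] by auto
    then obtain r' where r': "r' \<in> {1..n}" "\<sigma>' r' = \<sigma> 1" by auto
    then have "r' \<noteq> 1" using ne by auto
    then have "r' \<in> {2..n}" using r' by auto
    then have "\<sigma> r' = \<sigma> 1" using rest r' by simp
    then have "r' = 1" using inj_onD[OF bij_betw_imp_inj_on[OF b]] r' n by auto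
    then show False using \<open>r' \<noteq> 1\<close> by simp
  qed
  show ?thesis
  proof
    fix r assume r: "r \<in> {1..n}"
    show "\<sigma> r = \<sigma>' r"
    proof (cases "r = 1")
      case True then show ?thesis using one r by auto
    next
      case False then show ?thesis using rest r by auto
    qed
  qed
qed

lemma pm_eq_if:
  assumes "\<forall>r\<in>{1..n}. \<sigma> r = \<sigma>' r" shows "pm n \<sigma> = pm n \<sigma>'"
  using assms unfolding pm_def by (auto simp: fun_eq_iff)

lemma perm_matrix_pm: "bij_betw \<sigma> {1..n} {1..n} \<Longrightarrow> perm_matrix n (pm n \<sigma>)"
  unfolding perm_matrix_def pm_def by blast

lemma perm_matrix_D:
  assumes "perm_matrix n M" obtains \<sigma> where "bij_betw \<sigma> {1..n} {1..n}" "M = pm n \<sigma>"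
  using assms unfolding perm_matrix_def pm_def by (auto simp: fun_eq_iff)

lemma Pmat_props:
  assumes n: "n \<ge> 2"
  shows "\<exists>\<sigma>. bij_betw \<sigma> {1..n} {1..n} \<and> Pmat n i = pm n \<sigma>
     \<and> (\<forall>r\<in>{1..n-1}. \<forall>s\<in>{1..n-1}. pm n \<sigma> (r+1) (s+1) = Amat (n-1) i r s)
     \<and> (\<exists>r0\<in>{2..n}. \<sigma> r0 = 1)"
proof -
  define l where "l = n - 1"
  have l: "l \<ge> 1" "n = l + 1" using n unfolding l_def by auto
  define x0 where "x0 = x0f l i"
  have x0r: "0 \<le> x0" "x0 < int l" unfolding x0_def x0f_def using l by auto
  define f where "f r = (if int r - 2 = x0 then 1 else nat (tauf l i (int r - 2)) + 2)" for r
  have inj: "inj_on f {2..n}"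
  proof (rule inj_onI)
    fix r r' assume r: "r \<in> {2..n}" and r': "r' \<in> {2..n}" and e: "f r = f r'"
    show "r = r'"
    proof (rule ccontr)
      assume ne: "r \<noteq> r'"
      have a: "0 \<le> int r - 2" "int r - 2 < int l" "0 \<le> int r' - 2" "int r' - 2 < int l"
        using r r' l by auto
      show False
      proof (cases "int r - 2 = x0")
        case True
        then have "int r' - 2 \<noteq> x0" using ne by auto
        then show False using e True unfolding f_def by auto
      next
        case False
        show False
        proof (cases "int r' - 2 = x0")
          case True then show False using e False unfolding f_def by auto
        next
          case F2: False
          have "tauf l i (int r - 2) \<noteq> tauf l i (int r' - 2)"
            using tauf_inj[of l "int r - 2" "int r' - 2" i] a l False F2 ne unfolding x0_def by auto
          moreover have "0 \<le> tauf l i (int r - 2)" "0 \<le> tauf l i (int r' - 2)"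
            using tauf_range l by auto
          ultimately show False using e False F2 unfolding f_def by auto
        qed
      qed
    qed
  qed
  have img: "f ` {2..n} \<subseteq> {1..n}"
  proof
    fix y assume "y \<in> f ` {2..n}"
    then obtain r where r: "r \<in> {2..n}" "y = f r" by auto
    have "tauf l i (int r - 2) < int l" using tauf_range l by auto
    then show "y \<in> {1..n}" using r l unfolding f_def by auto
  qed
  obtain \<sigma> where \<sigma>: "bij_betw \<sigma> {1..n} {1..n}" "\<forall>r\<in>{2..n}. \<sigma> r = f r"
    using extend_inj[OF inj img] n by auto
  have inner: "pm n \<sigma> (r+1) (s+1) = Amat (n-1) i r s" if r: "r \<in> {1..n-1}" and s: "s \<in> {1..n-1}" for r s
  proof -
    have sr: "\<sigma> (r+1) = f (r+1)" using \<sigma>(2) r by auto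
    have ir: "int (r+1) - 2 = int r - 1" by simp
    have "(f (r+1) = s+1) \<longleftrightarrow> (int r - 1 \<noteq> x0f l i \<and> tauf l i (int r - 1) = int s - 1)"
    proof (cases "int r - 1 = x0f l i")
      case True then show ?thesis unfolding f_def ir x0_def using s by auto
    next
      case False
      have "0 \<le> tauf l i (int r - 1)" using tauf_range l by auto
      then show ?thesis unfolding f_def ir x0_def using False s by auto
    qed
    then show ?thesis unfolding pm_def using amat_char[of l r s i] r s l sr unfolding l_def by auto
  qed
  define P0 where "P0 = pm n \<sigma>"
  have Q0: "perm_matrix n P0 \<and> (\<forall>r\<in>{1..n-1}. \<forall>s\<in>{1..n-1}. P0 (r+1) (s+1) = Amat (n-1) i r s)"
    unfolding P0_def using perm_matrix_pm[OF \<sigma>(1)] inner by auto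
  have uniq: "M = P0" if Q: "perm_matrix n M \<and> (\<forall>r\<in>{1..n-1}. \<forall>s\<in>{1..n-1}. M (r+1) (s+1) = Amat (n-1) i r s)" for M
  proof -
    obtain \<sigma>' where \<sigma>': "bij_betw \<sigma>' {1..n} {1..n}" "M = pm n \<sigma>'" using Q perm_matrix_D by blast
    have "\<forall>r\<in>{2..n}. \<forall>s\<in>{2..n}. (\<sigma> r = s \<longleftrightarrow> \<sigma>' r = s)"
    proof (intro ballI)
      fix r s assume r: "r \<in> {2..n}" and s: "s \<in> {2..n}"
      have r1: "r - 1 \<in> {1..n-1}" "r - 1 + 1 = r" using r by auto
      have s1: "s - 1 \<in> {1..n-1}" "s - 1 + 1 = s" using s by auto
      have A: "pm n \<sigma> r s = Amat (n-1) i (r-1) (s-1)" using inner[OF r1(1) s1(1)] unfolding r1(2) s1(2) .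
      have "M ((r-1)+1) ((s-1)+1) = Amat (n-1) i (r-1) (s-1)" using Q r1(1) s1(1) by blast
      then have B: "M r s = Amat (n-1) i (r-1) (s-1)" unfolding r1(2) s1(2) .
      have "pm n \<sigma> r s = pm n \<sigma>' r s" using A B \<sigma>'(2) by simp
      then show "\<sigma> r = s \<longleftrightarrow> \<sigma>' r = s" using r unfolding pm_def by (auto split: if_splits)
    qed
    then have "\<forall>r\<in>{1..n}. \<sigma> r = \<sigma>' r" using pm_unique[OF \<sigma>(1) \<sigma>'(1)] by blast
    then have "pm n \<sigma> = pm n \<sigma>'" by (rule pm_eq_if)
    then show ?thesis unfolding P0_def \<sigma>'(2) by simp
  qed
  have "Pmat n i = P0" unfolding Pmat_def using Q0 uniq by (rule the_equality)
  moreover have "\<exists>r0\<in>{2..n}. \<sigma> r0 = 1"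
  proof
    show "nat x0 + 2 \<in> {2..n}" using x0r l by auto
    show "\<sigma> (nat x0 + 2) = 1" using \<sigma>(2) x0r l unfolding f_def by auto
  qed
  ultimately show ?thesis using \<sigma>(1) inner unfolding P0_def by blast
qed



lemma mod_small:
  assumes i: "i \<in> {1..l^2}" shows "(int i - 1) mod (int l ^ 2) = int i - 1"
proof -
  have "int i \<le> int (l^2)" using i by simp
  then have h: "int i \<le> int l ^ 2" by simp
  have h0: "0 \<le> int i - 1" using i by auto
  show ?thesis by (rule mod_pos_pos_trivial) (use h0 h in linarith)+
qed

lemma window_sum:
  fixes a :: "nat \<Rightarrow> real" and l :: nat and q :: int
  assumes l: "l \<ge> 1"
  defines "N \<equiv> int l ^ 2"
  shows "(\<Sum>i\<in>{1..l^2}. a i * (if \<exists>t. t + 1 < l \<and> (int i + int t) mod N = q mod N then 1 else 0))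
       = (\<Sum>t<l-1. a (nat ((q - int t - 1) mod N) + 1))"
proof -
  have N1: "N \<ge> 1" unfolding N_def using l by simp
  have lN: "int l - 1 < N" unfolding N_def using l by (simp add: power2_eq_square) (smt (verit) mult_le_cancel_left1 of_nat_0_le_iff)
  define g where "g t = nat ((q - int t - 1) mod N) + 1" for t :: nat
  define S where "S = {i\<in>{1..l^2}. \<exists>t. t + 1 < l \<and> (int i + int t) mod N = q mod N}"
  have lhs: "(\<Sum>i\<in>{1..l^2}. a i * (if \<exists>t. t + 1 < l \<and> (int i + int t) mod N = q mod N then 1 else 0))
      = (\<Sum>i\<in>S. a i)" unfolding S_def by (simp add: sum.inter_filter[symmetric] if_distrib cong: if_cong)
  have gi: "int (g t) = (q - int t - 1) mod N + 1" for t unfolding g_def using N1 by simp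
  have gmod: "(int (g t) + int t) mod N = q mod N" for t
  proof -
    have "int (g t) + int t = ((q - int t - 1) mod N) + (int t + 1)" using gi by simp
    then have "(int (g t) + int t) mod N = ((q - int t - 1) mod N + (int t + 1)) mod N" by (simp only:)
    also have "\<dots> = ((q - int t - 1) + (int t + 1)) mod N" by (rule mod_add_left_eq)
    finally show ?thesis by simp
  qed
  have grange: "g t \<in> {1..l^2}" for t
  proof -
    have "(q - int t - 1) mod N < N" using N1 by simp
    then have "int (g t) \<le> int (l^2)" using gi unfolding N_def by simp
    then have "g t \<le> l^2" by (simp only: of_nat_le_iff)
    moreover have "1 \<le> g t" by (simp add: g_def)
    ultimately show ?thesis by simp
  qed
  have Sg: "S = g ` {..<l-1}"
  proof
    show "S \<subseteq> g ` {..<l-1}"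
    proof
      fix i assume "i \<in> S"
      then obtain t where t: "i \<in> {1..l^2}" "t + 1 < l" "(int i + int t) mod N = q mod N" unfolding S_def by auto
      have "int i mod N = (q - int t) mod N" using t(3) by (metis add_diff_cancel_right' mod_diff_left_eq)
      then have "(int i - 1) mod N = (q - int t - 1) mod N" by (metis mod_diff_left_eq)
      moreover have "(int i - 1) mod N = int i - 1" using mod_small[OF t(1)] unfolding N_def .
      ultimately have "int i = int (g t)" using gi by simp
      then have "i = g t" by simp
      then show "i \<in> g ` {..<l-1}" using t(2) by auto
    qed
    show "g ` {..<l-1} \<subseteq> S"
    proof
      fix y assume "y \<in> g ` {..<l-1}"
      then obtain t where t: "t < l - 1" "y = g t" by auto
      have "t + 1 < l \<and> (int y + int t) mod N = q mod N" using t gmod by auto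
      then show "y \<in> S" unfolding S_def using grange t by blast
    qed
  qed
  have ginj: "inj_on g {..<l-1}"
  proof (rule inj_onI)
    fix t t' assume t: "t \<in> {..<l-1}" "t' \<in> {..<l-1}" and e: "g t = g t'"
    have "(q - int t - 1) mod N = (q - int t' - 1) mod N" using e gi by (metis add_right_cancel)
    then have "N dvd (q - int t - 1) - (q - int t' - 1)" by (simp add: mod_eq_dvd_iff)
    then have "N dvd int t' - int t" by simp
    then have d: "N dvd int t - int t'" by (metis dvd_minus_iff minus_diff_eq)
    have "int t < N" "int t' < N" using t lN by auto
    then have "\<bar>int t - int t'\<bar> < N" by simp
    then have ab: "-N < int t - int t' \<and> int t - int t' < N" by (simp add: abs_less_iff)
    obtain m where m: "int t - int t' = N*m" using d by (auto simp: dvd_def)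
    then have "m = 0" using small_mult_zero[of N m] ab N1 by simp
    then have "int t - int t' = 0" using m by simp
    then show "t = t'" by simp
  qed
  show ?thesis unfolding lhs Sg sum.reindex[OF ginj] by (simp add: g_def)
qed

lemma window_const:
  fixes a :: "nat \<Rightarrow> real" and l :: nat
  assumes l: "l \<ge> 1"
    and H: "\<forall>q::int. (\<Sum>i\<in>{1..l^2}. a i * (if \<exists>t. t + 1 < l \<and> (int i + int t) mod (int l ^ 2) = q mod (int l ^ 2) then 1 else 0)) = 0"
    and S0: "(\<Sum>i\<in>{1..l^2}. a i) = 0"
  shows "\<forall>i\<in>{1..l^2}. a i = 0"
proof (cases "l = 1")
  case True
  then show ?thesis using S0 by simp
next
  case False
  then have l2: "l \<ge> 2" using l by simp
  define N where "N = int l ^ 2"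
  define L where "L = int l"
  have N1: "N \<ge> 1" unfolding N_def using l by simp
  define aa where "aa k = a (nat ((k - 1) mod N) + 1)" for k :: int
  have W: "(\<Sum>t<l-1. aa (q - int t)) = 0" for q
    using H window_sum[OF l, of a q] unfolding aa_def N_def by (simp add: algebra_simps)
  obtain m where m: "l - 1 = Suc m" "l - 2 = m" using l2 by (metis Suc_diff_Suc Suc_1 Suc_le_lessD diff_Suc_1 numeral_2_eq_2 le_add_diff_inverse2)
  have step: "aa q = aa (q - (L - 1))" for q
  proof -
    have "(\<Sum>t<l-1. aa (q - int t)) = aa q + (\<Sum>t<m. aa (q - 1 - int t))"
      unfolding m(1) sum.lessThan_Suc_shift by (simp add: algebra_simps)
    moreover have "(\<Sum>t<l-1. aa (q - 1 - int t)) = (\<Sum>t<m. aa (q - 1 - int t)) + aa (q - 1 - int m)"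
      unfolding m(1) sum.lessThan_Suc by simp
    moreover have "int m = L - 2" using m l2 unfolding L_def by simp
    ultimately show ?thesis using W[of q] W[of "q-1"] by (simp add: algebra_simps)
  qed
  have iter: "aa q = aa (q - int k * (L - 1))" for q k
  proof (induction k)
    case 0 then show ?case by simp
  next
    case (Suc k)
    have "aa (q - int k * (L - 1)) = aa (q - int k * (L - 1) - (L - 1))" by (rule step)
    then show ?case using Suc by (simp add: algebra_simps)
  qed
  have per: "aa x = aa y" if "x mod N = y mod N" for x y
  proof -
    have "(x - 1) mod N = (y - 1) mod N" using that by (metis mod_diff_left_eq)
    then show ?thesis unfolding aa_def by simp
  qed
  have const: "aa (int i) = aa 1" for i :: nat
  proof -
    define x where "x = (1 - int i) * (L + 1)"
    define k where "k = nat (x mod N)"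
    have "int k = x mod N" unfolding k_def using N1 by simp
    also have "\<dots> = x - N * (x div N)" by (simp add: minus_mult_div_eq_mod)
    finally have k: "int k = x - N * (x div N)" .
    have NL: "N = L * L" unfolding N_def L_def by (simp add: power2_eq_square)
    have "int i - int k * (L - 1) - 1 = N * ((int i - 1) + (x div N) * (L - 1))"
      unfolding k x_def NL by (simp add: algebra_simps)
    then have "(int i - int k * (L - 1)) mod N = 1 mod N"
      by (metis mod_eq_dvd_iff dvd_triv_left)
    then have "aa (int i - int k * (L - 1)) = aa 1" by (rule per)
    then show ?thesis using iter[of "int i" k] by simp
  qed
  have ai: "a i = aa 1" if "i \<in> {1..l^2}" for i
  proof -
    have "a i = aa (int i)"
    proof -
      have "(int i - 1) mod N = int i - 1" using mod_small[OF that] unfolding N_def .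
      moreover have "nat (int i - 1) + 1 = i" using that by (cases i) auto
      ultimately show ?thesis unfolding aa_def by simp
    qed
    then show ?thesis using const by simp
  qed
  have "(\<Sum>i\<in>{1..l^2}. a i) = of_nat (l^2) * aa 1" using ai by simp
  then have "aa 1 = 0" using S0 l by simp
  then show ?thesis using ai by simp
qed



lemma sum_ind: "finite A \<Longrightarrow> (\<Sum>x\<in>A. (if x = c then (1::real) else 0)) = (if c \<in> A then 1 else 0)"
  by (simp add: sum.delta)

lemma pm_stoch:
  assumes b: "bij_betw \<sigma> {1..n} {1..n}" shows "pm n \<sigma> \<in> Gamma n"
proof -
  have inn: "\<sigma> r \<in> {1..n}" if "r \<in> {1..n}" for r using bij_betw_apply[OF b that] .
  have "is_matrix n (pm n \<sigma>)" unfolding is_matrix_def pm_def using inn by fastforce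
  moreover have "(\<Sum>j=1..n. pm n \<sigma> r j) = 1" if r: "r \<in> {1..n}" for r
  proof -
    have "(\<Sum>j=1..n. pm n \<sigma> r j) = (\<Sum>j\<in>{1..n}. if j = \<sigma> r then 1 else 0)"
      unfolding pm_def using r by (intro sum.cong) auto
    also have "\<dots> = 1" using inn[OF r] by (simp add: sum_ind)
    finally show ?thesis .
  qed
  ultimately show ?thesis unfolding Gamma_def stochastic_def by (auto simp: pm_def)
qed

lemma pm_colsum:
  assumes b: "bij_betw \<sigma> {1..n} {1..n}" and s: "s \<in> {1..n}"
  shows "(\<Sum>r=1..n. pm n \<sigma> r s) = 1"
proof -
  have "(\<Sum>r=1..n. pm n \<sigma> r s) = (\<Sum>r\<in>{1..n}. (\<lambda>x. if x = s then 1 else 0) (\<sigma> r))"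
    unfolding pm_def by (intro sum.cong) auto
  also have "\<dots> = (\<Sum>x\<in>{1..n}. if x = s then 1 else 0)" by (rule sum.reindex_bij_betw[OF b])
  also have "\<dots> = 1" using s by (simp add: sum_ind)
  finally show ?thesis .
qed

lemma pm_11:
  assumes b: "bij_betw \<sigma> {1..n} {1..n}" and r0: "r0 \<in> {2..n}" "\<sigma> r0 = 1"
  shows "pm n \<sigma> 1 1 = 0"
proof -
  have "\<sigma> 1 \<noteq> 1"
  proof
    assume "\<sigma> 1 = 1"
    then have "\<sigma> 1 = \<sigma> r0" using r0 by simp
    then have "1 = r0" using inj_onD[OF bij_betw_imp_inj_on[OF b]] r0 by auto
    then show False using r0 by simp
  qed
  then show ?thesis unfolding pm_def by auto
qed

lemma C_stoch: assumes "j \<in> {1..n}" shows "Cmat n j \<in> Gamma n"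
proof -
  have "is_matrix n (Cmat n j)" unfolding is_matrix_def Cmat_def using assms by auto
  moreover have "(\<Sum>s=1..n. Cmat n j r s) = 1" if r: "r \<in> {1..n}" for r
    unfolding Cmat_def using r assms by (simp add: sum_ind)
  ultimately show ?thesis unfolding Gamma_def stochastic_def by (auto simp: Cmat_def)
qed

lemma C_colsum: "(\<Sum>r=1..n. Cmat n j r s) = (if s = j then real n else 0)"
  unfolding Cmat_def by simp

lemma surj_pos:
  assumes l: "l \<ge> 1"
  shows "\<exists>r\<in>{1..l}. \<exists>s\<in>{1..l}. pos_num l r s mod (int l ^ 2) = q mod (int l ^ 2)"
proof -
  define L where "L = int l"
  have L1: "L \<ge> 1" using l unfolding L_def by simp
  define r where "r = nat ((q-1) mod L) + 1"
  define s where "s = nat (hh L (q-1) mod L) + 1"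
  have ri: "int r = (q-1) mod L + 1" unfolding r_def using L1 by simp
  have si: "int s = hh L (q-1) mod L + 1" unfolding s_def using L1 by simp
  have b1: "0 \<le> (q-1) mod L" "(q-1) mod L < L" "0 \<le> hh L (q-1) mod L" "hh L (q-1) mod L < L" using L1 by simp_all
  have "int r \<ge> 1" "int r \<le> int l" using ri b1 unfolding L_def by linarith+
  then have rr: "r \<in> {1..l}" by simp
  have "int s \<ge> 1" "int s \<le> int l" using si b1 unfolding L_def by linarith+
  then have ss: "s \<in> {1..l}" by simp
  have "(q - 1 + 1) mod L^2 = (int r + (int s - int r)*L) mod L^2"
    using poschar[of L "int r" "int s" "q-1"] L1 rr ss ri si unfolding L_def by auto
  then have "pos_num l r s mod (int l ^ 2) = q mod (int l ^ 2)" using pos_num_mod[of l r s] unfolding L_def by simp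
  then show ?thesis using rr ss by blast
qed

lemma inner_window:
  fixes a :: "nat \<Rightarrow> real"
  assumes l: "l \<ge> 1" and Z: "\<forall>r\<in>{1..l}. \<forall>s\<in>{1..l}. (\<Sum>i\<in>{1..l^2}. a i * Amat l i r s) = 0"
  shows "\<forall>q::int. (\<Sum>i\<in>{1..l^2}. a i * (if \<exists>t. t + 1 < l \<and> (int i + int t) mod (int l ^ 2) = q mod (int l ^ 2) then 1 else 0)) = 0"
proof
  fix q :: int
  obtain r s where rs: "r \<in> {1..l}" "s \<in> {1..l}" "pos_num l r s mod (int l ^ 2) = q mod (int l ^ 2)"
    using surj_pos[OF l, of q] by blast
  have Aeq: "Amat l i r s = (if \<exists>t. t + 1 < l \<and> (int i + int t) mod (int l ^ 2) = q mod (int l ^ 2) then 1 else 0)" for i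
    unfolding Amat_def using rs by simp
  show "(\<Sum>i\<in>{1..l^2}. a i * (if \<exists>t. t + 1 < l \<and> (int i + int t) mod (int l ^ 2) = q mod (int l ^ 2) then 1 else 0)) = 0"
  proof -
    have Zrs: "(\<Sum>i\<in>{1..l^2}. a i * Amat l i r s) = 0" using Z rs(1,2) by blast
    then show ?thesis unfolding Aeq .
  qed
qed



lemma indep:
  fixes n :: nat and a b :: "nat \<Rightarrow> real"
  assumes n: "n \<ge> 1"
    and H: "\<forall>r s. (\<Sum>i=1..(n-1)^2. a i * Pmat n i r s) + (\<Sum>j=1..n. b j * Cmat n j r s) = 0"
  shows "(\<forall>i\<in>{1..(n-1)^2}. a i = 0) \<and> (\<forall>j\<in>{1..n}. b j = 0)"
proof (cases "n = 1")
  case True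
  have "b 1 = 0" using H[rule_format, of 1 1] True by (simp add: Cmat_def)
  then show ?thesis using True by simp
next
  case False
  then have n2: "n \<ge> 2" using n by simp
  define l where "l = n - 1"
  have l1: "l \<ge> 1" using n2 unfolding l_def by simp
  have "\<forall>i. \<exists>\<sigma>. bij_betw \<sigma> {1..n} {1..n} \<and> Pmat n i = pm n \<sigma>
     \<and> (\<forall>r\<in>{1..n-1}. \<forall>s\<in>{1..n-1}. pm n \<sigma> (r+1) (s+1) = Amat (n-1) i r s)
     \<and> (\<exists>r0\<in>{2..n}. \<sigma> r0 = 1)" using Pmat_props[OF n2] by blast
  then obtain sg where sg: "\<And>i. bij_betw (sg i) {1..n} {1..n}" "\<And>i. Pmat n i = pm n (sg i)"
     "\<And>i. \<forall>r\<in>{1..n-1}. \<forall>s\<in>{1..n-1}. pm n (sg i) (r+1) (s+1) = Amat (n-1) i r s"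
     "\<And>i. \<exists>r0\<in>{2..n}. sg i r0 = 1" by metis
  have col: "(\<Sum>i=1..(n-1)^2. a i) + b s * real n = 0" if s: "s \<in> {1..n}" for s
  proof -
    have "0 = (\<Sum>r=1..n. (\<Sum>i=1..(n-1)^2. a i * Pmat n i r s) + (\<Sum>j=1..n. b j * Cmat n j r s))"
      using H by simp
    also have "\<dots> = (\<Sum>r=1..n. \<Sum>i=1..(n-1)^2. a i * Pmat n i r s) + (\<Sum>r=1..n. \<Sum>j=1..n. b j * Cmat n j r s)"
      by (rule sum.distrib)
    also have "(\<Sum>r=1..n. \<Sum>i=1..(n-1)^2. a i * Pmat n i r s) = (\<Sum>i=1..(n-1)^2. a i * (\<Sum>r=1..n. Pmat n i r s))"
      by (subst sum.swap) (simp add: sum_distrib_left)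
    also have "\<dots> = (\<Sum>i=1..(n-1)^2. a i)" using pm_colsum[OF sg(1) s] sg(2) by simp
    also have "(\<Sum>r=1..n. \<Sum>j=1..n. b j * Cmat n j r s) = (\<Sum>j=1..n. b j * (\<Sum>r=1..n. Cmat n j r s))"
      by (subst sum.swap) (simp add: sum_distrib_left)
    also have "\<dots> = (\<Sum>j=1..n. b j * (if s = j then real n else 0))" by (simp only: C_colsum)
    also have "\<dots> = b s * real n" using s by (simp add: if_distrib sum.delta cong: if_cong)
    finally show ?thesis by simp
  qed
  have b1: "b 1 = 0"
  proof -
    have "(\<Sum>i=1..(n-1)^2. a i * Pmat n i 1 1) = 0"
      using sg(2) pm_11[OF sg(1)] sg(4) by (intro sum.neutral) (metis mult_zero_right)
    moreover have "(\<Sum>j=1..n. b j * Cmat n j 1 1) = b 1" using n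
      by (simp add: Cmat_def if_distrib sum.delta cong: if_cong)
    ultimately show ?thesis using H[rule_format, of 1 1] by simp
  qed
  have sa: "(\<Sum>i=1..(n-1)^2. a i) = 0" using col[of 1] b1 n by simp
  have bz: "\<forall>j\<in>{1..n}. b j = 0" using col sa n by simp
  have Z: "\<forall>r\<in>{1..l}. \<forall>s\<in>{1..l}. (\<Sum>i\<in>{1..l^2}. a i * Amat l i r s) = 0"
  proof (intro ballI)
    fix r s assume r: "r \<in> {1..l}" and s: "s \<in> {1..l}"
    have "(\<Sum>j=1..n. b j * Cmat n j (r+1) (s+1)) = 0" using bz by simp
    then have "(\<Sum>i=1..(n-1)^2. a i * Pmat n i (r+1) (s+1)) = 0" using H[rule_format, of "r+1" "s+1"] by simp
    moreover have "Pmat n i (r+1) (s+1) = Amat l i r s" for i using sg(2,3) r s unfolding l_def by simp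
    ultimately show "(\<Sum>i\<in>{1..l^2}. a i * Amat l i r s) = 0" unfolding l_def by simp
  qed
  have "\<forall>i\<in>{1..l^2}. a i = 0"
    using window_const[OF l1 inner_window[OF l1 Z]] sa unfolding l_def by simp
  then show ?thesis using bz unfolding l_def by simp
qed



definition sc :: "real \<Rightarrow> (nat \<Rightarrow> nat \<Rightarrow> real) \<Rightarrow> (nat \<Rightarrow> nat \<Rightarrow> real)" where
  "sc c f = (\<lambda>r s. c * f r s)"

interpretation mv: vector_space sc
  by unfold_locales (auto simp: sc_def fun_eq_iff algebra_simps)

lemma sum_apply2: "(sum g A) x y = (\<Sum>p\<in>A. g p x y)"
proof (cases "finite A")
  case True then show ?thesis by (induct A rule: finite_induct) auto
next
  case False then show ?thesis by simp
qed

definition Dm :: "nat \<Rightarrow> nat \<Rightarrow> (nat \<Rightarrow> nat \<Rightarrow> real)" where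
  "Dm r s = (\<lambda>x y. (if x = r \<and> y = s then 1 else 0) - (if x = r \<and> y = 1 then 1 else 0))"

definition B0 :: "nat \<Rightarrow> (nat \<Rightarrow> nat \<Rightarrow> real) set" where
  "B0 n = insert (Cmat n 1) ((\<lambda>(r,s). Dm r s) ` ({1..n} \<times> {2..n}))"

lemma B0_card: assumes "n \<ge> 1" shows "card (B0 n) \<le> n^2 - n + 1"
proof -
  have "card ((\<lambda>(r,s). Dm r s) ` ({1..n} \<times> {2..n})) \<le> card ({1..n} \<times> {2..n})" by (rule card_image_le) simp
  also have "\<dots> = n * (n - 1)" by simp
  moreover have "card (B0 n) \<le> card ((\<lambda>(r,s). Dm r s) ` ({1..n} \<times> {2..n})) + 1"
    unfolding B0_def by (simp add: card_insert_if)
  ultimately have "card (B0 n) \<le> n * (n-1) + 1" by linarith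
  also have "n * (n-1) + 1 = n^2 - n + 1" by (simp add: power2_eq_square algebra_simps)
  finally show ?thesis .
qed

lemma B0_finite: "finite (B0 n)" unfolding B0_def by simp

lemma Gamma_span: assumes S: "S \<in> Gamma n" shows "S \<in> mv.span (B0 n)"
proof -
  have st: "is_matrix n S" "\<forall>i\<in>{1..n}. (\<Sum>j=1..n. S i j) = 1" using S unfolding Gamma_def stochastic_def by auto
  define T where "T = Cmat n 1 + (\<Sum>r\<in>{1..n}. \<Sum>s\<in>{2..n}. sc (S r s) (Dm r s))"
  have "T \<in> mv.span (B0 n)" unfolding T_def
  proof (intro mv.span_add mv.span_sum mv.span_scale)
    show "Cmat n 1 \<in> mv.span (B0 n)" by (rule mv.span_base) (simp add: B0_def)
    fix r s assume "r \<in> {1..n}" "s \<in> {2..n}"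
    then show "Dm r s \<in> mv.span (B0 n)" by (intro mv.span_base) (auto simp: B0_def)
  qed
  moreover have "S = T"
  proof (rule ext, rule ext)
    fix x y
    have T: "T x y = Cmat n 1 x y + (\<Sum>r\<in>{1..n}. \<Sum>s\<in>{2..n}. S r s * Dm r s x y)"
      unfolding T_def by (simp add: sum_apply2 sc_def)
    show "S x y = T x y"
    proof (cases "x \<in> {1..n}")
      case False
      then have "S x y = 0" using st(1) unfolding is_matrix_def by auto
      moreover have "Dm r s x y = 0" if "r \<in> {1..n}" for r s using that False unfolding Dm_def by auto
      ultimately show ?thesis unfolding T using False by (auto simp: Cmat_def)
    next
      case True
      have inner: "(\<Sum>r\<in>{1..n}. \<Sum>s\<in>{2..n}. S r s * Dm r s x y) = (\<Sum>s\<in>{2..n}. S x s * Dm x s x y)"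
      proof -
        have "(\<Sum>r\<in>{1..n}. \<Sum>s\<in>{2..n}. S r s * Dm r s x y) = (\<Sum>r\<in>{1..n}. if r = x then (\<Sum>s\<in>{2..n}. S x s * Dm x s x y) else 0)"
          by (intro sum.cong) (auto simp: Dm_def)
        also have "\<dots> = (\<Sum>s\<in>{2..n}. S x s * Dm x s x y)" using True by simp
        finally show ?thesis .
      qed
      show ?thesis
      proof (cases "y = 1")
        case True
        have "(\<Sum>s\<in>{2..n}. S x s * Dm x s x y) = - (\<Sum>s\<in>{2..n}. S x s)"
          unfolding Dm_def using True by (simp add: sum_negf[symmetric])
        moreover have "(\<Sum>j=1..n. S x j) = S x 1 + (\<Sum>s\<in>{2..n}. S x s)"
          using \<open>x \<in> {1..n}\<close> by (simp add: sum.atLeast_Suc_atMost numeral_2_eq_2)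
        ultimately show ?thesis unfolding T inner using True st(2) \<open>x \<in> {1..n}\<close> by (simp add: Cmat_def)
      next
        case False
        have "(\<Sum>s\<in>{2..n}. S x s * Dm x s x y) = (\<Sum>s\<in>{2..n}. if s = y then S x y else 0)"
          unfolding Dm_def using False by (intro sum.cong) auto
        also have "\<dots> = (if y \<in> {2..n} then S x y else 0)" by simp
        finally have e: "(\<Sum>s\<in>{2..n}. S x s * Dm x s x y) = (if y \<in> {2..n} then S x y else 0)" .
        have "y \<notin> {2..n} \<Longrightarrow> S x y = 0" using st(1) False unfolding is_matrix_def by auto
        then show ?thesis unfolding T inner e using False by (auto simp: Cmat_def)
      qed
    qed
  qed
  ultimately show ?thesis by simp
qed



lemma sum_one:
  assumes "finite A" "i \<in> A"
  shows "(\<Sum>k\<in>A. (if k = i then (c::real) else 0) * X k) = c * X i"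
proof -
  have "(\<Sum>k\<in>A. (if k = i then (c::real) else 0) * X k) = (\<Sum>k\<in>A. if k = i then c * X k else 0)"
    by (intro sum.cong) auto
  also have "\<dots> = c * X i" using assms by (simp add: sum.delta)
  finally show ?thesis .
qed

lemma sum_two:
  assumes "finite A" "i \<in> A" "i' \<in> A" "i \<noteq> i'"
  shows "(\<Sum>k\<in>A. (if k = i then 1 else if k = i' then -1 else (0::real)) * X k) = X i - X i'"
proof -
  have "(\<Sum>k\<in>A. (if k = i then 1 else if k = i' then -1 else (0::real)) * X k)
      = (\<Sum>k\<in>A. (if k = i then X k else 0) - (if k = i' then X k else 0))"
    using assms by (intro sum.cong) auto
  also have "\<dots> = X i - X i'" using assms by (simp add: sum_subtractf sum.delta)
  finally show ?thesis .
qed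

theorem mainTheorem6:
  fixes n :: nat
  assumes "n \<ge> 1"
  shows "(\<forall>i\<in>{1..(n-1)^2}. Pmat n i \<in> Gamma n) \<and> (\<forall>j\<in>{1..n}. Cmat n j \<in> Gamma n)
    \<and> card (Pmat n ` {1..(n-1)^2} \<union> Cmat n ` {1..n}) = n^2 - n + 1
    \<and> (\<forall>a b :: nat \<Rightarrow> real.
          (\<forall>r s. (\<Sum>i=1..(n-1)^2. a i * Pmat n i r s) + (\<Sum>j=1..n. b j * Cmat n j r s) = 0)
          \<longrightarrow> (\<forall>i\<in>{1..(n-1)^2}. a i = 0) \<and> (\<forall>j\<in>{1..n}. b j = 0))
    \<and> (\<forall>S\<in>Gamma n. \<exists>a b :: nat \<Rightarrow> real.
          \<forall>r s. S r s = (\<Sum>i=1..(n-1)^2. a i * Pmat n i r s) + (\<Sum>j=1..n. b j * Cmat n j r s))"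
proof -
  have n: "n \<ge> 1" using assms .
  have Pst: "\<forall>i\<in>{1..(n-1)^2}. Pmat n i \<in> Gamma n"
  proof
    fix i assume i: "i \<in> {1..(n-1)^2}"
    then have "n \<ge> 2" using n by (cases "n = 1") auto
    then obtain \<sigma> where "bij_betw \<sigma> {1..n} {1..n}" "Pmat n i = pm n \<sigma>" using Pmat_props by blast
    then show "Pmat n i \<in> Gamma n" using pm_stoch by simp
  qed
  have Cst: "\<forall>j\<in>{1..n}. Cmat n j \<in> Gamma n" using C_stoch by blast
  have IND: "\<forall>a b :: nat \<Rightarrow> real.
          (\<forall>r s. (\<Sum>i=1..(n-1)^2. a i * Pmat n i r s) + (\<Sum>j=1..n. b j * Cmat n j r s) = 0)
          \<longrightarrow> (\<forall>i\<in>{1..(n-1)^2}. a i = 0) \<and> (\<forall>j\<in>{1..n}. b j = 0)"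
    using indep[OF n] by blast
  have injP: "inj_on (Pmat n) {1..(n-1)^2}"
  proof (rule inj_onI, rule ccontr)
    fix i i' assume i: "i \<in> {1..(n-1)^2}" and i': "i' \<in> {1..(n-1)^2}" and e: "Pmat n i = Pmat n i'" and ne: "i \<noteq> i'"
    define a where "a k = (if k = i then 1 else if k = i' then -1 else (0::real))" for k
    have H: "(\<Sum>k=1..(n-1)^2. a k * Pmat n k r s) + (\<Sum>j=1..n. 0 * Cmat n j r s) = 0" for r s
      unfolding a_def using sum_two[of "{1..(n-1)^2}" i i' "\<lambda>k. Pmat n k _ _"] i i' ne e by simp
    have "a i = 0" using IND[rule_format, of a "\<lambda>_. 0", OF H] i by blast
    then show False unfolding a_def by simp
  qed
  have injC: "inj_on (Cmat n) {1..n}"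
  proof (rule inj_onI)
    fix j j' assume j: "j \<in> {1..n}" and j': "j' \<in> {1..n}" and e: "Cmat n j = Cmat n j'"
    have "Cmat n j 1 j = Cmat n j' 1 j" using e by simp
    then show "j = j'" using j n unfolding Cmat_def by (auto split: if_splits)
  qed
  have disj: "Pmat n ` {1..(n-1)^2} \<inter> Cmat n ` {1..n} = {}"
  proof (rule ccontr)
    assume "Pmat n ` {1..(n-1)^2} \<inter> Cmat n ` {1..n} \<noteq> {}"
    then obtain i j where i: "i \<in> {1..(n-1)^2}" and j: "j \<in> {1..n}" and e: "Pmat n i = Cmat n j" by blast
    define a where "a k = (if k = i then 1 else (0::real))" for k
    define b where "b k = (if k = j then -1 else (0::real))" for k
    have H: "(\<Sum>k=1..(n-1)^2. a k * Pmat n k r s) + (\<Sum>k=1..n. b k * Cmat n k r s) = 0" for r s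
    proof -
      show "(\<Sum>k=1..(n-1)^2. a k * Pmat n k r s) + (\<Sum>k=1..n. b k * Cmat n k r s) = 0"
        unfolding a_def b_def using sum_one[of "{1..(n-1)^2}" i 1 "\<lambda>k. Pmat n k r s"]
          sum_one[of "{1..n}" j "-1" "\<lambda>k. Cmat n k r s"] i j e by simp
    qed
    have "a i = 0" using IND[rule_format, OF H] i by blast
    then show False unfolding a_def by simp
  qed
  define F where "F = Pmat n ` {1..(n-1)^2} \<union> Cmat n ` {1..n}"
  have finF: "finite F" unfolding F_def by simp
  have cardF: "card F = n^2 - n + 1"
  proof -
    have "card F = (n-1)^2 + n" unfolding F_def
      using card_Un_disjoint[OF _ _ disj] card_image[OF injP] card_image[OF injC] by simp
    also have "\<dots> = n^2 - n + 1" using n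
      by (cases n) (auto simp: power2_eq_square algebra_simps)
    finally show ?thesis .
  qed
  have decomp: "(\<Sum>v\<in>F. sc (c v) v) r s = (\<Sum>i=1..(n-1)^2. c (Pmat n i) * Pmat n i r s) + (\<Sum>j=1..n. c (Cmat n j) * Cmat n j r s)" for c r s
  proof -
    have "(\<Sum>v\<in>F. sc (c v) v) r s = (\<Sum>v\<in>F. c v * v r s)" by (simp add: sum_apply2 sc_def)
    also have "\<dots> = (\<Sum>v\<in>Pmat n ` {1..(n-1)^2}. c v * v r s) + (\<Sum>v\<in>Cmat n ` {1..n}. c v * v r s)"
      unfolding F_def by (rule sum.union_disjoint) (use disj in auto)
    also have "\<dots> = (\<Sum>i=1..(n-1)^2. c (Pmat n i) * Pmat n i r s) + (\<Sum>j=1..n. c (Cmat n j) * Cmat n j r s)"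
      by (simp only: sum.reindex[OF injP] sum.reindex[OF injC] o_def)
    finally show ?thesis .
  qed
  have indF: "mv.independent F"
  proof -
    have "\<not> (\<exists>u. (\<exists>v\<in>F. u v \<noteq> 0) \<and> (\<Sum>v\<in>F. sc (u v) v) = 0)"
    proof
      assume "\<exists>u. (\<exists>v\<in>F. u v \<noteq> 0) \<and> (\<Sum>v\<in>F. sc (u v) v) = 0"
      then obtain c where c: "\<exists>v\<in>F. c v \<noteq> 0" and z: "(\<Sum>v\<in>F. sc (c v) v) = 0" by blast
      have H: "(\<Sum>i=1..(n-1)^2. c (Pmat n i) * Pmat n i r s) + (\<Sum>j=1..n. c (Cmat n j) * Cmat n j r s) = 0" for r s
        using z decomp[of c r s] by simp
      have "(\<forall>i\<in>{1..(n-1)^2}. c (Pmat n i) = 0) \<and> (\<forall>j\<in>{1..n}. c (Cmat n j) = 0)"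
        using IND[rule_format, of "\<lambda>i. c (Pmat n i)" "\<lambda>j. c (Cmat n j)", OF H] by blast
      then have "\<forall>v\<in>F. c v = 0" unfolding F_def by blast
      then show False using c by blast
    qed
    then show ?thesis using mv.dependent_finite[OF finF] by simp
  qed
  have FG: "F \<subseteq> Gamma n" unfolding F_def using Pst Cst by blast
  have span: "S \<in> mv.span F" if S: "S \<in> Gamma n" for S
  proof (rule ccontr)
    assume nS: "S \<notin> mv.span F"
    have ind2: "mv.independent (insert S F)" by (rule mv.independent_insertI[OF nS indF])
    have sub: "insert S F \<subseteq> mv.span (B0 n)" using S FG Gamma_span by blast
    have "card (insert S F) \<le> card (B0 n)" using mv.independent_span_bound[OF B0_finite ind2 sub] by simp
    also have "\<dots> \<le> n^2 - n + 1" by (rule B0_card[OF n])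
    finally have c1: "card (insert S F) \<le> card F" using cardF by simp
    have "S \<notin> F" using nS mv.span_superset by blast
    then have "card (insert S F) = card F + 1" using finF by simp
    then show False using c1 by simp
  qed
  have SP: "\<forall>S\<in>Gamma n. \<exists>a b :: nat \<Rightarrow> real.
          \<forall>r s. S r s = (\<Sum>i=1..(n-1)^2. a i * Pmat n i r s) + (\<Sum>j=1..n. b j * Cmat n j r s)"
  proof
    fix S assume "S \<in> Gamma n"
    then have "S \<in> mv.span F" by (rule span)
    then obtain u where u: "S = (\<Sum>v\<in>F. sc (u v) v)" unfolding mv.span_finite[OF finF] by blast
    show "\<exists>a b :: nat \<Rightarrow> real. \<forall>r s. S r s = (\<Sum>i=1..(n-1)^2. a i * Pmat n i r s) + (\<Sum>j=1..n. b j * Cmat n j r s)"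
      by (rule exI[of _ "\<lambda>i. u (Pmat n i)"], rule exI[of _ "\<lambda>j. u (Cmat n j)"]) (simp add: u decomp)
  qed
  show ?thesis using Pst Cst cardF IND SP unfolding F_def by blast
qed

end
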